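(* Let $f,g:\mathbb{R}^{N}\rightarrow [-\infty ,\infty ]$ be Borel measurable with $g\geq 0$, $f\not\equiv\infty$ and $g\not\equiv\infty$. Let $f_+:=\max\{f,0\}$, $m_{f_+}:=\inf f_+$, $m_g:=\inf g$ and $m_{f_{+},g}:=(m_{f_{+}}-m_{g})/2$. Then $f\veebar g\geq 0$ and $$\|(f\veebar g)^{-1}\|_{\phi }\leq 2^{N}\left(\|(\check{f}_{+}-m_{f_{+},g})^{-1}\|_{\phi }+\|(\check{g}+m_{f_{+},g})^{-1}\|_{\phi }\right)$$ for every Young function $\phi$, where $\check f_+:=(\check f)_+$.
   Context: $(f\veebar g)(x):=\inf_{y}\max\{f(x-y),g(y)\}$. For $h\ge0$, $h^{-1}:=1/h$ (with $1/0=\infty$, $1/\infty=0$). A Young function is a nonconstant $\phi:[0,\infty]\to[0,\infty]$ with $\phi(0)=0$, nondecreasing, convex and left continuous; $\|h\|_{\phi}:=\inf\{r>0:\int_{\mathbb{R}^N}\phi(r^{-1}|h|)\le 1\}$ ($=\infty$ if no such $r$). Enclosing balls: for nonempty bounded $X\subset\mathbb{R}^N$, $\overline{B}_X$ is the unique closed ball of minimal diameter containing $X$; $\overline{B}_X:=\mathbb{R}^N$ if $X$ unbounded; $\overline{B}_\emptyset:=\{0\}$. For $f:\mathbb{R}^N\to[-\infty,\infty]$ and $\xi\in[-\infty,\infty]$, $\rho^-_f(\xi)\in[0,\infty]$ is the radius of $\overline{B}_{\{f<\xi\}}$, $\gamma^-_f(t):=\sup\{\xi:\rho^-_f(\xi)\le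 t\}$ for $t\ge0$, and $\check f(x):=\gamma^-_f(|x|)$. *)

theory Defs
  imports "HOL-Analysis.Analysis"
begin

definition supconv :: "('a::euclidean_space \<Rightarrow> ereal) \<Rightarrow> ('a \<Rightarrow> ereal) \<Rightarrow> 'a \<Rightarrow> ereal" where
  "supconv f g x = (INF y. max (f (x - y)) (g y))"

text \<open>h^{-1} = 1/h for h \<ge> 0, with 1/0 = \<infinity>, 1/\<infinity> = 0 (only used on nonnegative h).\<close>
definition hinv :: "ereal \<Rightarrow> ennreal" where
  "hinv h = inverse (e2ennreal h)"

definition young :: "(ennreal \<Rightarrow> ennreal) \<Rightarrow> bool" where
  "young \<phi> \<longleftrightarrow> (\<exists>x y. \<phi> x \<noteq> \<phi> y) \<and> \<phi> 0 = 0 \<and> mono \<phi>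
     \<and> (\<forall>x y (l::real). 0 \<le> l \<and> l \<le> 1 \<longrightarrow>
          \<phi> (ennreal l * x + ennreal (1 - l) * y) \<le> ennreal l * \<phi> x + ennreal (1 - l) * \<phi> y)
     \<and> (\<forall>x. 0 < x \<longrightarrow> (\<phi> \<longlongrightarrow> \<phi> x) (at_left x))"

text \<open>Luxemburg (Orlicz) norm w.r.t. Lebesgue measure on R^N; Inf {} = \<infinity>.\<close>
definition orlicz_norm :: "(ennreal \<Rightarrow> ennreal) \<Rightarrow> ('a::euclidean_space \<Rightarrow> ennreal) \<Rightarrow> ennreal" where
  "orlicz_norm \<phi> h = Inf {ennreal r | r. r > 0 \<and>
      (\<integral>\<^sup>+ x. \<phi> (ennreal (1 / r) * h x) \<partial>lebesgue) \<le> 1}"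

definition encl_radius :: "'a::euclidean_space set \<Rightarrow> ennreal" where
  "encl_radius X = (if X = {} then 0 else if \<not> bounded X then \<infinity>
      else ennreal (THE r. (\<exists>c. X \<subseteq> cball c r) \<and> (\<forall>c' r'. X \<subseteq> cball c' r' \<longrightarrow> r \<le> r')))"

definition rho_minus :: "('a::euclidean_space \<Rightarrow> ereal) \<Rightarrow> ereal \<Rightarrow> ennreal" where
  "rho_minus f \<xi> = encl_radius {x. f x < \<xi>}"

definition gamma_minus :: "('a::euclidean_space \<Rightarrow> ereal) \<Rightarrow> real \<Rightarrow> ereal" where
  "gamma_minus f t = Sup {\<xi>. rho_minus f \<xi> \<le> ennreal t}"

definition check :: "('a::euclidean_space \<Rightarrow> ereal) \<Rightarrow> 'a \<Rightarrow> ereal" where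
  "check f x = gamma_minus f (norm x)"

end

theory Submission
  imports Defs
begin

definition rad :: "'a::euclidean_space set \<Rightarrow> real" where
  "rad X = Inf {r. \<exists>c. X \<subseteq> cball c r}"

lemma rad_set_bdd:
  assumes "X \<noteq> {}" shows "bdd_below {r. \<exists>c. X \<subseteq> cball c r}"
proof -
  obtain x where "x \<in> X" using assms by auto
  then show ?thesis unfolding bdd_below_def
    by (auto intro!: exI[of _ 0] simp: subset_iff) (meson dist_not_less_zero mem_cball not_le order_trans)
qed

lemma rad_set_ne:
  assumes "bounded X" shows "{r. \<exists>c. X \<subseteq> cball c r} \<noteq> {}"
  using assms bounded_subset_cball[of X] by auto

lemma rad_le:
  assumes "X \<noteq> {}" "X \<subseteq> cball c r" shows "rad X \<le> r"
  unfolding rad_def using assms by (intro cInf_lower rad_set_bdd) auto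

lemma rad_attained:
  assumes "X \<noteq> {}" "bounded X"
  shows "\<exists>c. X \<subseteq> cball c (rad X)"
proof -
  obtain x0 where x0: "x0 \<in> X" using assms by auto
  define K where "K r = (\<Inter>x\<in>X. cball x r)" for r
  have memK: "c \<in> K r \<longleftrightarrow> X \<subseteq> cball c r" for c r
    by (auto simp: K_def dist_commute subset_iff)
  have ex: "\<exists>c. X \<subseteq> cball c r" if "r > rad X" for r
  proof -
    have "\<exists>r'\<in>{r. \<exists>c. X \<subseteq> cball c r}. r' < r"
      using cInf_less_iff[OF rad_set_ne[OF assms(2)] rad_set_bdd[OF assms(1)]] that
      unfolding rad_def by auto
    then obtain r' c where "X \<subseteq> cball c r'" "r' < r" by auto
    then show ?thesis by (intro exI[of _ c]) (auto simp: subset_iff)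
  qed
  define S where "S = cball x0 (rad X + 1)"
  have "S \<inter> \<Inter>(K ` {r. r > rad X}) \<noteq> {}"
  proof (rule compact_imp_fip_image)
    show "compact S" by (simp add: S_def)
    show "closed (K i)" for i by (simp add: K_def closed_INT)
    fix I' assume I': "finite I'" "I' \<subseteq> {r. r > rad X}"
    define r0 where "r0 = (if I' = {} then rad X + 1 else min (Min I') (rad X + 1))"
    have r0: "r0 > rad X" using I' by (auto simp: r0_def)
    have "r0 \<le> r" if "r \<in> I'" for r using I' that by (auto simp: r0_def intro: min.coboundedI1)
    obtain c where c: "X \<subseteq> cball c r0" using ex[OF r0] by auto
    have "c \<in> S" using c x0 r0 by (auto simp: S_def r0_def dist_commute subset_iff split: if_splits)
    moreover have "c \<in> K r" if "r \<in> I'" for r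
      using c \<open>r \<in> I' \<Longrightarrow> r0 \<le> r\<close>[OF that] by (auto simp: memK subset_iff)
    ultimately show "S \<inter> \<Inter> (K ` I') \<noteq> {}" by auto
  qed
  then obtain c where c: "\<And>r. r > rad X \<Longrightarrow> X \<subseteq> cball c r"
    by (auto simp: memK) blast
  have "X \<subseteq> cball c (rad X)"
  proof
    fix x assume "x \<in> X"
    then have "dist c x \<le> r" if "r > rad X" for r using c[OF that] by auto
    then have "dist c x \<le> rad X" by (meson dense not_le)
    then show "x \<in> cball c (rad X)" by simp
  qed
  then show ?thesis ..
qed

lemma rad_nonneg: "X \<noteq> {} \<Longrightarrow> bounded X \<Longrightarrow> rad X \<ge> 0"
  using rad_attained[of X] by (auto simp: subset_iff) (meson dist_not_less_zero mem_cball not_le order_trans)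

lemma encl_radius_eq:
  assumes "X \<noteq> {}" "bounded X"
  shows "encl_radius X = ennreal (rad X)"
proof -
  have "(THE r. (\<exists>c. X \<subseteq> cball c r) \<and> (\<forall>c' r'. X \<subseteq> cball c' r' \<longrightarrow> r \<le> r')) = rad X"
  proof (rule the_equality)
    show "(\<exists>c. X \<subseteq> cball c (rad X)) \<and> (\<forall>c' r'. X \<subseteq> cball c' r' \<longrightarrow> rad X \<le> r')"
      using rad_attained[OF assms] rad_le[OF assms(1)] by blast
    fix r assume "(\<exists>c. X \<subseteq> cball c r) \<and> (\<forall>c' r'. X \<subseteq> cball c' r' \<longrightarrow> r \<le> r')"
    then show "r = rad X" using rad_attained[OF assms] rad_le[OF assms(1)] by (meson antisym)
  qed
  then show ?thesis using assms by (simp add: encl_radius_def)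
qed

lemma encl_radius_mono:
  assumes "X \<subseteq> Y" shows "encl_radius X \<le> encl_radius Y"
proof (cases "X = {}")
  case True then show ?thesis by (simp add: encl_radius_def)
next
  case False
  show ?thesis
  proof (cases "bounded Y")
    case False then show ?thesis using \<open>X \<noteq> {}\<close> assms by (auto simp: encl_radius_def)
  next
    case True
    then have bX: "bounded X" using assms bounded_subset by blast
    obtain c where "Y \<subseteq> cball c (rad Y)" using rad_attained[OF _ True] False assms by blast
    then have "rad X \<le> rad Y" using assms False by (intro rad_le) auto
    moreover have "Y \<noteq> {}" using False assms by auto
    ultimately show ?thesis using encl_radius_eq[OF False bX] encl_radius_eq[of Y] True
      by (auto intro: ennreal_leI)
  qed
qed

lemma emeasure_lborel_Ici0: "emeasure lborel {0::real..} = \<infinity>"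
proof (rule ccontr)
  assume "emeasure lborel {0::real..} \<noteq> \<infinity>"
  then obtain c where c: "emeasure lborel {0::real..} = ennreal c" "c \<ge> 0"
    by (cases "emeasure lborel {0::real..}") auto
  have "ennreal (c + 1) = emeasure lborel {0..<c+1}" using c by simp
  also have "\<dots> \<le> emeasure lborel {0::real..}" by (intro emeasure_mono) auto
  finally show False using c by (simp add: ennreal_le_iff)
qed

lemma measure_below_ennreal:
  "emeasure lborel {t::real. 0 \<le> t \<and> ennreal t < a} = a"
proof (cases a)
  case (real r)
  then have "{t::real. 0 \<le> t \<and> ennreal t < a} = {0..<r}" by (auto simp: ennreal_less_iff)
  then show ?thesis using real by simp
next
  case top
  then have "{t::real. 0 \<le> t \<and> ennreal t < a} = {0..}" by auto
  then show ?thesis using top emeasure_lborel_Ici0 by simp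
qed

lemma layer_cake:
  fixes s :: "'a::euclidean_space \<Rightarrow> ennreal"
  assumes s[measurable]: "s \<in> borel_measurable lborel"
  shows "(\<integral>\<^sup>+x. s x \<partial>lborel) = (\<integral>\<^sup>+t. indicator {0..} t * emeasure lborel {x. ennreal t < s x} \<partial>(lborel::real measure))"
proof -
  let ?F = "\<lambda>x (t::real). indicator {p. 0 \<le> snd p \<and> ennreal (snd p) < s (fst p)} (x, t) :: ennreal"
  have meas: "case_prod ?F \<in> borel_measurable (lborel \<Otimes>\<^sub>M lborel)"
    by measurable
  have "(\<integral>\<^sup>+x. s x \<partial>lborel) = (\<integral>\<^sup>+x. (\<integral>\<^sup>+t. ?F x t \<partial>lborel) \<partial>lborel)"
  proof (intro nn_integral_cong)
    fix x
    have "(\<integral>\<^sup>+t. ?F x t \<partial>lborel) = (\<integral>\<^sup>+t. indicator {t::real. 0 \<le> t \<and> ennreal t < s x} t \<partial>lborel)"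
      by (intro nn_integral_cong) (auto simp: indicator_def)
    also have "\<dots> = emeasure lborel {t::real. 0 \<le> t \<and> ennreal t < s x}"
      by (intro nn_integral_indicator) measurable
    also have "\<dots> = s x" by (rule measure_below_ennreal)
    finally show "s x = (\<integral>\<^sup>+t. ?F x t \<partial>lborel)" by simp
  qed
  also have "\<dots> = (\<integral>\<^sup>+t. (\<integral>\<^sup>+x. ?F x t \<partial>lborel) \<partial>lborel)"
    using lborel_pair.Fubini'[OF meas] by simp
  also have "\<dots> = (\<integral>\<^sup>+t. indicator {0..} t * emeasure lborel {x. ennreal t < s x} \<partial>lborel)"
  proof (intro nn_integral_cong)
    fix t :: real
    have "(\<integral>\<^sup>+x. ?F x t \<partial>lborel) = (\<integral>\<^sup>+x. indicator {0..} t * indicator {x. ennreal t < s x} x \<partial>lborel)"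
      by (intro nn_integral_cong) (auto simp: indicator_def)
    also have "\<dots> = indicator {0..} t * emeasure lborel {x. ennreal t < s x}"
      by (intro nn_integral_cmult_indicator) measurable
    finally show "(\<integral>\<^sup>+x. ?F x t \<partial>lborel) = indicator {0..} t * emeasure lborel {x. ennreal t < s x}" .
  qed
  finally show ?thesis .
qed

lemma measurable_level_measure:
  fixes P :: "'a::euclidean_space \<Rightarrow> ennreal"
  assumes [measurable]: "P \<in> borel_measurable lborel"
  shows "(\<lambda>t::real. emeasure lborel {x. ennreal t < P x}) \<in> borel_measurable lborel"
proof -
  have "Measurable.pred (lborel \<Otimes>\<^sub>M lborel) (\<lambda>p::real\<times>'a. ennreal (fst p) < P (snd p))"
    by measurable
  then have E: "{p::real\<times>'a. ennreal (fst p) < P (snd p)} \<in> sets (lborel \<Otimes>\<^sub>M lborel)"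
    by (simp add: pred_def space_pair_measure)
  have "(\<lambda>t. emeasure lborel (Pair t -` {p::real\<times>'a. ennreal (fst p) < P (snd p)})) \<in> borel_measurable lborel"
    by (rule lborel.measurable_emeasure_Pair[OF E])
  moreover have "Pair t -` {p::real\<times>'a. ennreal (fst p) < P (snd p)} = {x. ennreal t < P x}" for t
    by auto
  ultimately show ?thesis by simp
qed

lemma distribution_compare:
  fixes W P Q :: "'a::euclidean_space \<Rightarrow> ennreal"
  assumes P[measurable]: "P \<in> borel_measurable lborel" and Q[measurable]: "Q \<in> borel_measurable lborel"
  assumes H: "\<And>t S. 0 \<le> t \<Longrightarrow> S \<in> sets lborel \<Longrightarrow> S \<subseteq> {x. ennreal t < W x} \<Longrightarrow>
     emeasure lborel S \<le> C * (emeasure lborel {x. ennreal t < P x} + emeasure lborel {x. ennreal t < Q x})"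
  shows "(\<integral>\<^sup>+x. W x \<partial>lborel) \<le> C * ((\<integral>\<^sup>+x. P x \<partial>lborel) + (\<integral>\<^sup>+x. Q x \<partial>lborel))"
proof -
  have [measurable]: "(\<lambda>t::real. emeasure lborel {x. ennreal t < P x}) \<in> borel_measurable lborel"
    "(\<lambda>t::real. emeasure lborel {x. ennreal t < Q x}) \<in> borel_measurable lborel"
    by (intro measurable_level_measure; simp)+
  have key: "(\<integral>\<^sup>+x. s x \<partial>lborel) \<le> C * ((\<integral>\<^sup>+x. P x \<partial>lborel) + (\<integral>\<^sup>+x. Q x \<partial>lborel))"
    if sf: "simple_function lborel s" and sW: "s \<le> W" for s
  proof -
    have sm[measurable]: "s \<in> borel_measurable lborel" using sf by (rule borel_measurable_simple_function)
    have "(\<integral>\<^sup>+x. s x \<partial>lborel) = (\<integral>\<^sup>+t. indicator {0..} t * emeasure lborel {x. ennreal t < s x} \<partial>(lborel::real measure))"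
      by (rule layer_cake[OF sm])
    also have "\<dots> \<le> (\<integral>\<^sup>+t. C * (indicator {0..} t * emeasure lborel {x. ennreal t < P x} + indicator {0..} t * emeasure lborel {x. ennreal t < Q x}) \<partial>(lborel::real measure))"
    proof (intro nn_integral_mono)
      fix t :: real
      show "indicator {0..} t * emeasure lborel {x. ennreal t < s x} \<le> C * (indicator {0..} t * emeasure lborel {x. ennreal t < P x} + indicator {0..} t * emeasure lborel {x. ennreal t < Q x})"
      proof (cases "0 \<le> t")
        case True
        have "emeasure lborel {x. ennreal t < s x} \<le> C * (emeasure lborel {x. ennreal t < P x} + emeasure lborel {x. ennreal t < Q x})"
          using sW by (intro H[OF True]) (auto simp: le_fun_def intro: less_le_trans)
        then show ?thesis using True by simp
      qed simp
    qed
    also have "\<dots> = C * ((\<integral>\<^sup>+t. indicator {0..} t * emeasure lborel {x. ennreal t < P x} \<partial>(lborel::real measure)) + (\<integral>\<^sup>+t. indicator {0..} t * emeasure lborel {x. ennreal t < Q x} \<partial>(lborel::real measure)))"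
      by (subst nn_integral_cmult; (subst nn_integral_add)?) auto
    also have "\<dots> = C * ((\<integral>\<^sup>+x. P x \<partial>lborel) + (\<integral>\<^sup>+x. Q x \<partial>lborel))"
      by (simp add: layer_cake[OF P] layer_cake[OF Q])
    finally show ?thesis .
  qed
  show ?thesis
    unfolding nn_integral_def[of lborel W]
    by (rule SUP_least) (auto simp: nn_integral_eq_simple_integral[symmetric] intro: key)
qed

lemma downset_borel:
  fixes D :: "real set"
  assumes dc: "\<And>a b. b \<in> D \<Longrightarrow> a \<le> b \<Longrightarrow> a \<in> D"
  shows "D \<in> sets borel"
proof (cases "D = {} \<or> D = UNIV")
  case True then show ?thesis by auto
next
  case False
  then obtain z where z: "z \<notin> D" by auto
  have ub: "b < z" if "b \<in> D" for b using dc[OF that, of z] z by force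
  then have bdd: "bdd_above D" by (meson bdd_above.I less_imp_le)
  have ne: "D \<noteq> {}" using False by auto
  show ?thesis
  proof (cases "Sup D \<in> D")
    case True
    define s where "s = Sup D"
    have "D = {..s}" using True dc cSup_upper[OF _ bdd] unfolding s_def by auto
    then show ?thesis by simp
  next
    case nin: False
    have "D = {..<Sup D}"
    proof
      show "D \<subseteq> {..<Sup D}"
      proof
        fix x assume "x \<in> D"
        then have "x \<le> Sup D" "x \<noteq> Sup D" using cSup_upper[OF _ bdd] nin by auto
        then show "x \<in> {..<Sup D}" by simp
      qed
      show "{..<Sup D} \<subseteq> D"
      proof
        fix x assume "x \<in> {..<Sup D}"
        then obtain b where "b \<in> D" "x < b" using less_cSup_iff[OF ne bdd] by auto
        then show "x \<in> D" using dc by auto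
      qed
    qed
    define s where "s = Sup D"
    have "D = {..<s}" using \<open>D = {..<Sup D}\<close> unfolding s_def .
    then show ?thesis by simp
  qed
qed

lemma gamma_minus_mono: "mono (gamma_minus f)"
proof (rule monoI)
  fix s t :: real assume "s \<le> t"
  then have "ennreal s \<le> ennreal t" by (rule ennreal_leI)
  then have "{\<xi>. rho_minus f \<xi> \<le> ennreal s} \<subseteq> {\<xi>. rho_minus f \<xi> \<le> ennreal t}" by auto
  then show "gamma_minus f s \<le> gamma_minus f t" unfolding gamma_minus_def by (rule Sup_subset_mono)
qed

lemma check_measurable[measurable]: "check f \<in> borel_measurable borel"
proof (rule borel_measurableI_less)
  fix y
  have D: "{t. gamma_minus f t < y} \<in> sets borel"
  proof (rule downset_borel)
    fix a b assume "b \<in> {t. gamma_minus f t < y}" "a \<le> b"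
    then show "a \<in> {t. gamma_minus f t < y}"
    proof -
      have "gamma_minus f a \<le> gamma_minus f b" using gamma_minus_mono[of f] \<open>a \<le> b\<close> by (rule monoD)
      then show ?thesis using \<open>b \<in> _\<close> by simp
    qed
  qed
  have nm: "(norm :: 'a \<Rightarrow> real) \<in> borel_measurable borel" by simp
  have "norm -` {t. gamma_minus f t < y} \<inter> space borel \<in> sets (borel :: 'a measure)"
    by (rule measurable_sets[OF nm D])
  moreover have "{x \<in> space borel. check f x < y} = norm -` {t. gamma_minus f t < y} \<inter> space borel"
    by (auto simp: check_def)
  ultimately show "{x \<in> space borel. check f x < y} \<in> sets borel" by simp
qed

lemma gamma_le:
  assumes "ennreal t < rho_minus f \<xi>"
  shows "gamma_minus f t \<le> \<xi>"
  unfolding gamma_minus_def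
proof (rule Sup_least)
  fix \<eta> assume "\<eta> \<in> {\<xi>. rho_minus f \<xi> \<le> ennreal t}"
  then have h: "rho_minus f \<eta> \<le> ennreal t" by simp
  show "\<eta> \<le> \<xi>"
  proof (rule ccontr)
    assume "\<not> \<eta> \<le> \<xi>"
    then have "{x. f x < \<xi>} \<subseteq> {x. f x < \<eta>}" by auto
    then have "rho_minus f \<xi> \<le> rho_minus f \<eta>" unfolding rho_minus_def by (rule encl_radius_mono)
    then show False using h assms by simp
  qed
qed

lemma gamma_ge:
  assumes "{x. f x < \<xi>} = {}"
  shows "\<xi> \<le> gamma_minus f t"
proof -
  have "rho_minus f \<xi> = 0" unfolding rho_minus_def assms by (simp add: encl_radius_def)
  then show ?thesis unfolding gamma_minus_def by (intro Sup_upper) simp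
qed

lemma power_sum_le:
  fixes a b :: real
  assumes "0 \<le> a" "0 \<le> b" "n \<ge> 1"
  shows "(a + b) ^ n \<le> 2 ^ (n - 1) * (a ^ n + b ^ n)"
  using assms(3)
proof (induction n rule: dec_induct)
  case base then show ?case by simp
next
  case (step n)
  have aux: "(a + b) * (a ^ n + b ^ n) \<le> 2 * (a ^ Suc n + b ^ Suc n)"
  proof -
    have "0 \<le> (a - b) * (a ^ n - b ^ n)"
    proof (cases "a \<le> b")
      case True
      then have "a ^ n \<le> b ^ n" using assms by (simp add: power_mono)
      then show ?thesis using True by (simp add: mult_nonpos_nonpos)
    next
      case False
      then have "b ^ n \<le> a ^ n" using assms by (simp add: power_mono)
      then show ?thesis using False by simp
    qed
    then show ?thesis by (simp add: algebra_simps)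
  qed
  have "(a + b) ^ Suc n = (a + b) * (a + b) ^ n" by simp
  also have "\<dots> \<le> (a + b) * (2 ^ (n - 1) * (a ^ n + b ^ n))"
    using step.IH assms by (intro mult_left_mono) auto
  also have "\<dots> = 2 ^ (n - 1) * ((a + b) * (a ^ n + b ^ n))" by simp
  also have "\<dots> \<le> 2 ^ (n - 1) * (2 * (a ^ Suc n + b ^ Suc n))"
    using aux by (intro mult_left_mono) auto
  also have "\<dots> = 2 ^ (Suc n - 1) * (a ^ Suc n + b ^ Suc n)"
    using step.hyps by (cases n) auto
  finally show ?case .
qed

lemma ereal_approx_seq:
  fixes \<xi> :: ereal and M0 :: real
  assumes "ereal M0 < \<xi>"
  shows "\<exists>s::nat \<Rightarrow> real. incseq s \<and> (\<forall>n. M0 < s n \<and> ereal (s n) < \<xi>) \<and> (\<forall>e. e < \<xi> \<longrightarrow> (\<exists>n. e < ereal (s n)))"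
proof (cases \<xi>)
  case PInf
  define s where "s n = M0 + 1 + real n" for n
  have "incseq s" by (auto simp: incseq_def s_def)
  moreover have "\<forall>n. M0 < s n \<and> ereal (s n) < \<xi>" using PInf by (auto simp: s_def)
  moreover have "\<exists>n. e < ereal (s n)" if "e < \<xi>" for e
  proof (cases e)
    case (real x)
    obtain n where "x - M0 < real n" using reals_Archimedean2 by blast
    then show ?thesis using real by (auto simp: s_def intro!: exI[of _ n])
  qed (use that PInf in auto)
  ultimately show ?thesis by blast
next
  case (real z)
  then have zM: "M0 < z" using assms by simp
  define s where "s n = z - (z - M0) / (real n + 2)" for n
  have "incseq s"
    unfolding incseq_def s_def using zM by (auto intro!: divide_left_mono mult_pos_pos)
  moreover have "M0 < s n" for n
  proof -
    have "(z - M0) / (real n + 2) < z - M0" using zM by (simp add: divide_less_eq)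
    then show ?thesis by (simp add: s_def)
  qed
  moreover have "ereal (s n) < \<xi>" for n using zM real by (simp add: s_def)
  moreover have "\<exists>n. e < ereal (s n)" if "e < \<xi>" for e
  proof (cases e)
    case (real x)
    then have xz: "x < z" using that \<open>\<xi> = ereal z\<close> by simp
    obtain n where n: "(z - M0) / (z - x) < real n" using reals_Archimedean2 by blast
    have "(z - M0) / (z - x) < real n + 2" using n by simp
    then have "(z - M0) < (real n + 2) * (z - x)" using xz by (simp add: divide_less_eq mult.commute)
    then have "(z - M0) / (real n + 2) < z - x" by (simp add: divide_less_eq mult.commute)
    then show ?thesis using real by (auto simp: s_def intro!: exI[of _ n])
  qed (use that real in auto)
  ultimately show ?thesis by blast
qed (use assms in auto)

lemma supconv_less_iff:
  "supconv f g x < e \<longleftrightarrow> (\<exists>y. f (x - y) < e \<and> g y < e)"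
  unfolding supconv_def by (simp add: INF_less_iff)

lemma supconv_nonneg:
  assumes "\<And>y. 0 \<le> g y" shows "0 \<le> supconv f g x"
  unfolding supconv_def by (rule INF_greatest) (meson assms max.coboundedI2)

lemma set_pred_borel:
  fixes P :: "'a::euclidean_space \<Rightarrow> bool"
  assumes "Measurable.pred borel P" shows "{x. P x} \<in> sets lborel"
  using assms by (simp add: pred_def)

lemma ennreal_two_pow: "ennreal ((2::real) ^ n) = 2 ^ n"
  by (induction n) (simp_all add: ennreal_mult' ennreal_numeral[symmetric] del: ennreal_numeral)

context
  fixes f g :: "'a::euclidean_space \<Rightarrow> ereal" and \<mu> \<nu> m :: real
  assumes gnn: "\<And>x. 0 \<le> g x"
    and mu: "(INF x. max (f x) 0) = ereal \<mu>" and nu: "(INF x. g x) = ereal \<nu>"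
    and m: "m = (\<mu> - \<nu>) / 2"
begin

lemma mu_nonneg: "0 \<le> \<mu>"
proof -
  have "0 \<le> (INF x. max (f x) 0)" by (rule INF_greatest) simp
  then show ?thesis using mu by simp
qed

lemma nu_nonneg: "0 \<le> \<nu>"
proof -
  have "0 \<le> (INF x. g x)" by (rule INF_greatest) (simp add: gnn)
  then show ?thesis using nu by simp
qed

lemma supconv_less_gt:
  assumes "supconv f g x < e"
  shows "ereal (max \<mu> \<nu>) < e"
proof -
  obtain y where y: "f (x - y) < e" "g y < e" using assms supconv_less_iff by blast
  have "ereal \<mu> \<le> max (f (x - y)) 0" unfolding mu[symmetric] by (rule INF_lower) simp
  moreover have "max (f (x - y)) 0 < e" using y gnn[of y] by auto
  moreover have "ereal \<nu> \<le> g y" unfolding nu[symmetric] by (rule INF_lower) simp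
  ultimately have "ereal \<mu> < e" "ereal \<nu> < e" using y by (auto intro: order_le_less_trans)
  then show ?thesis by (simp add: max_def)
qed

lemma absm: "\<bar>m\<bar> \<le> max \<mu> \<nu> / 2"
  using mu_nonneg nu_nonneg by (auto simp: m)

lemma Fbound:
  assumes r: "max \<mu> \<nu> < r" and r\<xi>: "ereal r < \<xi>"
    and z: "ennreal (norm z) < rho_minus f (ereal r)"
  shows "max (check f z) 0 - ereal m < ereal (3/2) * \<xi>"
proof -
  have "check f z \<le> ereal r" unfolding check_def by (rule gamma_le[OF z])
  moreover have "0 < r" using r mu_nonneg by auto
  ultimately have "max (check f z) 0 - ereal m \<le> ereal (r - m)"
    by (cases "check f z") (auto simp: max_def)
  also have "r - m < 3/2 * r" using absm r by auto
  also have "ereal (3/2 * r) < ereal (3/2) * \<xi>" using r\<xi> by (cases \<xi>) auto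
  finally show ?thesis by simp
qed

lemma Gbound:
  assumes r: "max \<mu> \<nu> < r" and r\<xi>: "ereal r < \<xi>"
    and z: "ennreal (norm z) < rho_minus g (ereal r)"
  shows "check g z + ereal m < ereal (3/2) * \<xi>"
proof -
  have c: "check g z \<le> ereal r" unfolding check_def by (rule gamma_le[OF z])
  have "check g z + ereal m \<le> ereal (r + m)" using c by (cases "check g z") auto
  also have "r + m < 3/2 * r" using absm r mu_nonneg by auto
  also have "ereal (3/2 * r) < ereal (3/2) * \<xi>" using r\<xi> by (cases \<xi>) auto
  finally show ?thesis by simp
qed

abbreviation "FS \<xi> \<equiv> {x. max (check f x) 0 - ereal m < ereal (3/2) * \<xi>}"
abbreviation "GS \<xi> \<equiv> {x. check g x + ereal m < ereal (3/2) * \<xi>}"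

lemma FS_meas: "FS \<xi> \<in> sets lborel" by (rule set_pred_borel) measurable
lemma GS_meas: "GS \<xi> \<in> sets lborel" by (rule set_pred_borel) measurable

lemma level_bound:
  assumes r: "max \<mu> \<nu> < r" and r\<xi>: "ereal r < \<xi>"
  shows "emeasure lborel (closure {x. supconv f g x < ereal r})
           \<le> 2 ^ (DIM('a) - 1) * (emeasure lborel (FS \<xi>) + emeasure lborel (GS \<xi>))"
proof -
  define D where "D = {x. supconv f g x < ereal r}"
  define X where "X = {x. f x < ereal r}"
  define Y where "Y = {y. g y < ereal r}"
  have D_sub: "x \<in> D \<Longrightarrow> \<exists>y. x - y \<in> X \<and> y \<in> Y" for x
    unfolding D_def X_def Y_def using supconv_less_iff by blast
  show ?thesis
  proof (cases "D = {}")
    case True then show ?thesis by (simp add: D_def[symmetric])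
  next
    case False
    then obtain x0 y0 where "x0 - y0 \<in> X" "y0 \<in> Y" using D_sub by blast
    then have Xne: "X \<noteq> {}" and Yne: "Y \<noteq> {}" by auto
    have pos: "(2::ennreal) ^ (DIM('a) - 1) \<noteq> 0" by simp
    show ?thesis
    proof (cases "bounded X \<and> bounded Y")
      case False
      then consider "\<not> bounded X" | "\<not> bounded Y" by blast
      then have "emeasure lborel (FS \<xi>) = \<infinity> \<or> emeasure lborel (GS \<xi>) = \<infinity>"
      proof cases
        case 1
        then have "rho_minus f (ereal r) = \<infinity>" using Xne by (simp add: rho_minus_def encl_radius_def X_def)
        then have "FS \<xi> = UNIV" using Fbound[OF r r\<xi>] by auto
        then show ?thesis by simp
      next
        case 2
        then have "rho_minus g (ereal r) = \<infinity>" using Yne by (simp add: rho_minus_def encl_radius_def Y_def)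
        then have "GS \<xi> = UNIV" using Gbound[OF r r\<xi>] by auto
        then show ?thesis by simp
      qed
      then have "2 ^ (DIM('a) - 1) * (emeasure lborel (FS \<xi>) + emeasure lborel (GS \<xi>)) = \<infinity>"
        using pos by (auto simp: ennreal_mult_eq_top_iff)
      then show ?thesis by simp
    next
      case True
      then have bX: "bounded X" and bY: "bounded Y" by auto
      define a where "a = rad X"
      define b where "b = rad Y"
      obtain cX where cX: "X \<subseteq> cball cX a" using rad_attained[OF Xne bX] a_def by auto
      obtain cY where cY: "Y \<subseteq> cball cY b" using rad_attained[OF Yne bY] b_def by auto
      have a0: "0 \<le> a" and b0: "0 \<le> b" using rad_nonneg Xne bX Yne bY a_def b_def by auto
      have "D \<subseteq> cball (cX + cY) (a + b)"
      proof
        fix x assume "x \<in> D"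
        then obtain y where y: "x - y \<in> X" "y \<in> Y" using D_sub by blast
        have e: "(cX + cY) - x = (cX - (x - y)) + (cY - y)" by (simp add: algebra_simps)
        have "dist (cX + cY) x \<le> dist cX (x - y) + dist cY y"
          unfolding dist_norm e by (rule norm_triangle_ineq)
        also have "\<dots> \<le> a + b" using y cX cY by (auto intro!: add_mono)
        finally show "x \<in> cball (cX + cY) (a + b)" by simp
      qed
      then have "closure D \<subseteq> cball (cX + cY) (a + b)"
        by (rule closure_minimal) simp
      then have "emeasure lborel (closure D) \<le> emeasure lborel (cball (cX + cY) (a + b))"
        by (rule emeasure_mono) simp
      also have "\<dots> = ennreal (unit_ball_vol (DIM('a)) * (a + b) ^ DIM('a))"
        using a0 b0 by (intro emeasure_cball) simp
      also have "\<dots> \<le> ennreal (2 ^ (DIM('a) - 1) * (unit_ball_vol (DIM('a)) * a ^ DIM('a) + unit_ball_vol (DIM('a)) * b ^ DIM('a)))"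
      proof (intro ennreal_leI)
        have "(a + b) ^ DIM('a) \<le> 2 ^ (DIM('a) - 1) * (a ^ DIM('a) + b ^ DIM('a))"
          using a0 b0 by (intro power_sum_le) (auto simp: DIM_positive Suc_le_eq)
        then have "unit_ball_vol (DIM('a)) * (a + b) ^ DIM('a) \<le> unit_ball_vol (DIM('a)) * (2 ^ (DIM('a) - 1) * (a ^ DIM('a) + b ^ DIM('a)))"
          by (rule mult_left_mono) simp
        also have "\<dots> = 2 ^ (DIM('a) - 1) * (unit_ball_vol (DIM('a)) * a ^ DIM('a) + unit_ball_vol (DIM('a)) * b ^ DIM('a))"
          by (simp add: algebra_simps)
        finally show "unit_ball_vol (DIM('a)) * (a + b) ^ DIM('a) \<le> 2 ^ (DIM('a) - 1) * (unit_ball_vol (DIM('a)) * a ^ DIM('a) + unit_ball_vol (DIM('a)) * b ^ DIM('a))" .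
      qed
      also have "\<dots> = 2 ^ (DIM('a) - 1) * (emeasure lborel (ball (0::'a) a) + emeasure lborel (ball (0::'a) b))"
        using a0 b0 by (simp add: emeasure_ball ennreal_mult' ennreal_plus[symmetric] ennreal_two_pow)
      also have "\<dots> \<le> 2 ^ (DIM('a) - 1) * (emeasure lborel (FS \<xi>) + emeasure lborel (GS \<xi>))"
      proof (intro mult_left_mono add_mono emeasure_mono)
        show "ball 0 a \<subseteq> FS \<xi>"
        proof
          fix z :: 'a assume "z \<in> ball 0 a"
          then have "norm z < a" by simp
          then have "ennreal (norm z) < rho_minus f (ereal r)"
            using encl_radius_eq[OF Xne bX] by (simp add: rho_minus_def X_def[symmetric] a_def ennreal_less_iff)
          then show "z \<in> FS \<xi>" using Fbound[OF r r\<xi>] by simp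
        qed
        show "ball 0 b \<subseteq> GS \<xi>"
        proof
          fix z :: 'a assume "z \<in> ball 0 b"
          then have "norm z < b" by simp
          then have "ennreal (norm z) < rho_minus g (ereal r)"
            using encl_radius_eq[OF Yne bY] by (simp add: rho_minus_def Y_def[symmetric] b_def ennreal_less_iff)
          then show "z \<in> GS \<xi>" using Gbound[OF r r\<xi>] by simp
        qed
      qed (auto simp: FS_meas GS_meas)
      finally show ?thesis by (simp add: D_def)
    qed
  qed
qed

lemma core:
  assumes S: "S \<in> sets lborel" "S \<subseteq> {x. supconv f g x < \<xi>}"
  shows "emeasure lborel S \<le> 2 ^ (DIM('a) - 1) * (emeasure lborel (FS \<xi>) + emeasure lborel (GS \<xi>))"
proof (cases "ereal (max \<mu> \<nu>) < \<xi>")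
  case False
  then have "S = {}" using S supconv_less_gt by force
  then show ?thesis by simp
next
  case True
  obtain s :: "nat \<Rightarrow> real" where s: "incseq s" "\<And>n. max \<mu> \<nu> < s n" "\<And>n. ereal (s n) < \<xi>"
    "\<And>e. e < \<xi> \<Longrightarrow> \<exists>n. e < ereal (s n)"
    using ereal_approx_seq[OF True] by blast
  define K where "K n = closure {x. supconv f g x < ereal (s n)}" for n
  have Kmeas: "range K \<subseteq> sets lborel" by (auto simp: K_def)
  have Kinc: "incseq K"
    unfolding incseq_def K_def
  proof (intro allI impI closure_mono)
    fix i j :: nat assume "i \<le> j"
    then have "s i \<le> s j" using s(1) by (simp add: incseq_def)
    then show "{x. supconv f g x < ereal (s i)} \<subseteq> {x. supconv f g x < ereal (s j)}"
      using order_less_le_trans by fastforce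
  qed
  have "S \<subseteq> (\<Union>n. K n)"
  proof
    fix x assume "x \<in> S"
    then have "supconv f g x < \<xi>" using S by auto
    then obtain n where "supconv f g x < ereal (s n)" using s(4) by blast
    then have "x \<in> K n" unfolding K_def using closure_subset[of "{x. supconv f g x < ereal (s n)}"] by (simp add: subset_iff)
    then show "x \<in> (\<Union>n. K n)" by (rule UN_I[OF UNIV_I])
  qed
  then have "emeasure lborel S \<le> emeasure lborel (\<Union>n. K n)"
    using Kmeas by (intro emeasure_mono) auto
  also have "\<dots> = (SUP n. emeasure lborel (K n))"
    using SUP_emeasure_incseq[OF Kmeas Kinc] by simp
  also have "\<dots> \<le> 2 ^ (DIM('a) - 1) * (emeasure lborel (FS \<xi>) + emeasure lborel (GS \<xi>))"
    unfolding K_def by (rule SUP_least) (rule level_bound[OF s(2) s(3)])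
  finally show ?thesis .
qed

end

lemma enn2ereal_zero: "enn2ereal 0 = 0"
  using enn2ereal_ennreal[of 0] by simp

lemma hinv_less_k:
  assumes k: "0 < k" and e: "0 \<le> e"
  shows "(d < ennreal k * hinv e) \<longleftrightarrow> (e < ereal k * enn2ereal (inverse d))"
proof (cases d rule: ennreal_cases)
  case (real x)
  show ?thesis
  proof (cases "x = 0")
    case True
    then show ?thesis using real k e
      by (cases e) (auto simp: hinv_def ennreal_mult_less_top ennreal_inverse_positive ennreal_zero_less_mult_iff)
  next
    case False
    then have x: "0 < x" using real by simp
    have invd: "inverse d = ennreal (1 / x)" using real x by (simp add: inverse_ennreal divide_inverse)
    show ?thesis
    proof (cases e)
      case (real y)
      then have y: "0 \<le> y" using e by simp
      show ?thesis
      proof (cases "y = 0")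
        case True
        then show ?thesis using real \<open>d = ennreal x\<close> invd k x
          by (simp add: hinv_def ennreal_mult_top)
      next
        case False
        then have y0: "0 < y" using y by simp
        have "hinv e = ennreal (1 / y)" using real y0 by (simp add: hinv_def inverse_ennreal divide_inverse)
        then have "(d < ennreal k * hinv e) \<longleftrightarrow> x < k * (1 / y)"
          using \<open>d = ennreal x\<close> k y0 x by (simp add: ennreal_mult''[symmetric] ennreal_less_iff)
        also have "\<dots> \<longleftrightarrow> y < k * (1 / x)" using x y0 k by (simp add: field_simps)
        also have "\<dots> \<longleftrightarrow> e < ereal k * enn2ereal (inverse d)"
          using invd real x k by simp
        finally show ?thesis .
      qed
    next
      case PInf
      then show ?thesis using invd k x \<open>d = ennreal x\<close> by (simp add: hinv_def)
    next
      case MInf then show ?thesis using e by simp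
    qed
  qed
next
  case top
  then show ?thesis using k e
    by (cases e) (auto simp: hinv_def ennreal_mult_top top_unique enn2ereal_zero)
qed

lemma scale_less:
  assumes r: "0 < r"
  shows "(c < ennreal (1 / r) * v) \<longleftrightarrow> (ennreal r * c < v)"
proof -
  have inv: "ennreal r * ennreal (1 / r) = 1" using r by (simp add: ennreal_mult''[symmetric])
  have "(c < ennreal (1 / r) * v) \<longleftrightarrow> (ennreal r * c < ennreal r * (ennreal (1 / r) * v))"
  proof
    assume "c < ennreal (1 / r) * v"
    then show "ennreal r * c < ennreal r * (ennreal (1 / r) * v)"
      using r by (intro ennreal_mult_strict_left_mono) auto
  next
    assume a: "ennreal r * c < ennreal r * (ennreal (1 / r) * v)"
    have "ennreal (1 / r) * (ennreal r * c) < ennreal (1 / r) * (ennreal r * (ennreal (1 / r) * v))"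
      by (rule ennreal_mult_strict_left_mono[OF a]) (use r in auto)
    moreover have e1: "ennreal (1 / r) * (ennreal r * c) = c" by (metis inv mult.assoc mult.commute mult_1)
    moreover have e2: "ennreal (1 / r) * (ennreal r * (ennreal (1 / r) * v)) = ennreal (1 / r) * v"
      by (metis inv mult.assoc mult.commute mult_1)
    ultimately show "c < ennreal (1 / r) * v" by metis
  qed
  also have "ennreal r * (ennreal (1 / r) * v) = v" by (metis inv mult.assoc mult_1)
  finally show ?thesis .
qed

lemma downset_borel_ennreal:
  fixes D :: "ennreal set"
  assumes dc: "\<And>a b. b \<in> D \<Longrightarrow> a \<le> b \<Longrightarrow> a \<in> D"
  shows "D \<in> sets borel"
proof (cases "Sup D \<in> D")
  case True
  define s where "s = Sup D"
  have "D = {..s}" using True dc Sup_upper unfolding s_def by auto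
  then show ?thesis by simp
next
  case nin: False
  define s where "s = Sup D"
  have "D = {..<s}"
  proof
    show "D \<subseteq> {..<s}"
    proof
      fix x assume "x \<in> D"
      then have "x \<le> s" "x \<noteq> s" using Sup_upper nin unfolding s_def by auto
      then show "x \<in> {..<s}" by simp
    qed
    show "{..<s} \<subseteq> D"
    proof
      fix x assume "x \<in> {..<s}"
      then obtain b where "b \<in> D" "x < b" using less_Sup_iff unfolding s_def by auto
      then show "x \<in> D" using dc by auto
    qed
  qed
  then show ?thesis by simp
qed

lemma mono_ennreal_measurable:
  fixes \<phi> :: "ennreal \<Rightarrow> ennreal"
  assumes "mono \<phi>" shows "\<phi> \<in> borel_measurable borel"
proof (rule borel_measurableI_less)
  fix y
  have "{v. \<phi> v < y} \<in> sets borel"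
  proof (rule downset_borel_ennreal)
    fix a b assume "b \<in> {v. \<phi> v < y}" "a \<le> b"
    then show "a \<in> {v. \<phi> v < y}"
    proof -
      have "\<phi> a \<le> \<phi> b" using assms \<open>a \<le> b\<close> by (rule monoD)
      then show ?thesis using \<open>b \<in> _\<close> by simp
    qed
  qed
  then show "{x \<in> space borel. \<phi> x < y} \<in> sets borel" by simp
qed

lemma young_threshold:
  assumes y: "young \<phi>" and t: "0 \<le> t"
  shows "\<exists>c. \<forall>v. (ennreal t < \<phi> v) \<longleftrightarrow> (c < v)"
proof -
  have mono: "mono \<phi>" and phi0: "\<phi> 0 = 0"
    and lc: "\<And>x. 0 < x \<Longrightarrow> (\<phi> \<longlongrightarrow> \<phi> x) (at_left x)"
    using y unfolding young_def by auto
  define L where "L = {v. ennreal t < \<phi> v}"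
  define c where "c = Inf L"
  have "(ennreal t < \<phi> v) \<longleftrightarrow> (c < v)" for v
  proof
    assume v: "ennreal t < \<phi> v"
    then have vL: "v \<in> L" by (simp add: L_def)
    then have cv: "c \<le> v" unfolding c_def by (rule Inf_lower)
    show "c < v"
    proof (rule ccontr)
      assume "\<not> c < v"
      then have cv': "c = v" using cv by simp
      have "v \<noteq> 0" using v phi0 by auto
      then have v0: "0 < v" using not_gr_zero by blast
      have "eventually (\<lambda>x. ennreal t < \<phi> x) (at_left v)"
        using lc[OF v0] v by (rule order_tendstoD)
      then obtain b where b: "b < v" "\<And>y. b < y \<Longrightarrow> y < v \<Longrightarrow> ennreal t < \<phi> y"
        using v0 by (auto simp: eventually_at_left)
      obtain y where "b < y" "y < v" using dense[OF b(1)] by auto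
      then have "y \<in> L" using b(2) by (simp add: L_def)
      then have "c \<le> y" unfolding c_def by (rule Inf_lower)
      then show False using \<open>y < v\<close> cv' by simp
    qed
  next
    assume "c < v"
    then obtain v' where "v' \<in> L" "v' < v" unfolding c_def by (auto simp: Inf_less_iff)
    then have "\<phi> v' \<le> \<phi> v" using monoD[OF mono, of v' v] by simp
    then show "ennreal t < \<phi> v" using \<open>v' \<in> L\<close> by (auto simp: L_def)
  qed
  then show ?thesis by blast
qed

lemma young_scale:
  assumes y: "young \<phi>" and l: "0 \<le> l" "l \<le> 1"
  shows "\<phi> (ennreal l * x) \<le> ennreal l * \<phi> x"
proof -
  have "\<phi> (ennreal l * x + ennreal (1 - l) * 0) \<le> ennreal l * \<phi> x + ennreal (1 - l) * \<phi> 0"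
    using y l unfolding young_def by blast
  moreover have "\<phi> 0 = 0" using y unfolding young_def by blast
  ultimately show ?thesis by simp
qed

lemma hinv_measurable[measurable]: "hinv \<in> borel_measurable borel"
  unfolding hinv_def[abs_def] by measurable

context
  fixes f g :: "'a::euclidean_space \<Rightarrow> ereal" and \<mu> \<nu> m :: real
  assumes gnn: "\<And>x. 0 \<le> g x"
    and mu: "(INF x. max (f x) 0) = ereal \<mu>" and nu: "(INF x. g x) = ereal \<nu>"
    and m: "m = (\<mu> - \<nu>) / 2"
begin

lemma Fm_nonneg: "0 \<le> max (check f x) 0 - ereal m"
proof -
  have mu0: "0 \<le> \<mu>" by (rule mu_nonneg[OF gnn mu nu m])
  have nu0: "0 \<le> \<nu>" by (rule nu_nonneg[OF gnn mu nu m])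
  have "ereal \<mu> \<le> max (check f x) 0"
  proof (cases "\<mu> > 0")
    case True
    have "{y. f y < ereal \<mu>} = {}"
    proof (rule ccontr)
      assume "{y. f y < ereal \<mu>} \<noteq> {}"
      then obtain y where y: "f y < ereal \<mu>" by auto
      moreover have "ereal \<mu> \<le> max (f y) 0" unfolding mu[symmetric] by (rule INF_lower) simp
      ultimately show False using True by (auto simp: max_def split: if_splits)
    qed
    then have "ereal \<mu> \<le> check f x" unfolding check_def by (rule gamma_ge)
    then show ?thesis by (rule order_trans) simp
  next
    case False
    then have "ereal \<mu> \<le> 0" by simp
    then show ?thesis by (rule order_trans) simp
  qed
  then have a: "ereal \<mu> - ereal m \<le> max (check f x) 0 - ereal m" by (rule ereal_minus_mono) simp
  have "0 \<le> ereal \<mu> - ereal m" using mu0 nu0 m by simp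
  then show ?thesis using a by (rule order_trans)
qed

lemma Gm_nonneg: "0 \<le> check g x + ereal m"
proof -
  have mu0: "0 \<le> \<mu>" by (rule mu_nonneg[OF gnn mu nu m])
  have nu0: "0 \<le> \<nu>" by (rule nu_nonneg[OF gnn mu nu m])
  have "{y. g y < ereal \<nu>} = {}"
  proof (rule ccontr)
    assume "{y. g y < ereal \<nu>} \<noteq> {}"
    then obtain y where y: "g y < ereal \<nu>" by auto
    moreover have "ereal \<nu> \<le> g y" unfolding nu[symmetric] by (rule INF_lower) simp
    ultimately show False by simp
  qed
  then have "ereal \<nu> \<le> check g x" unfolding check_def by (rule gamma_ge)
  then have a: "ereal \<nu> + ereal m \<le> check g x + ereal m" by (rule add_right_mono)
  have "0 \<le> ereal \<nu> + ereal m" using mu0 nu0 m by simp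
  then show ?thesis using a by (rule order_trans)
qed

lemma main_int:
  assumes y: "young \<phi>" and r: "0 < r"
  shows "(\<integral>\<^sup>+x. \<phi> (ennreal (1/r) * hinv (supconv f g x)) \<partial>lborel)
    \<le> 2 ^ (DIM('a) - 1) * ((\<integral>\<^sup>+x. \<phi> (ennreal (1/r) * (ennreal (3/2) * hinv (max (check f x) 0 - ereal m))) \<partial>lborel)
       + (\<integral>\<^sup>+x. \<phi> (ennreal (1/r) * (ennreal (3/2) * hinv (check g x + ereal m))) \<partial>lborel))"
proof -
  have phim[measurable]: "\<phi> \<in> borel_measurable borel"
    using y unfolding young_def by (intro mono_ennreal_measurable) auto
  show ?thesis
  proof (rule distribution_compare)
    show "(\<lambda>x. \<phi> (ennreal (1/r) * (ennreal (3/2) * hinv (max (check f x) 0 - ereal m)))) \<in> borel_measurable lborel"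
      by measurable
    show "(\<lambda>x. \<phi> (ennreal (1/r) * (ennreal (3/2) * hinv (check g x + ereal m)))) \<in> borel_measurable lborel"
      by measurable
    fix t S assume t: "0 \<le> t" and S: "S \<in> sets lborel"
      and SW: "S \<subseteq> {x. ennreal t < \<phi> (ennreal (1/r) * hinv (supconv f g x))}"
    obtain c where c: "\<And>v. (ennreal t < \<phi> v) \<longleftrightarrow> (c < v)" using young_threshold[OF y t] by blast
    define \<xi> where "\<xi> = enn2ereal (inverse (ennreal r * c))"
    have eqk: "(ennreal t < \<phi> (ennreal (1/r) * (ennreal k * hinv e))) \<longleftrightarrow> e < ereal k * \<xi>"
      if "0 \<le> e" "0 < k" for e k
    proof -
      have "(ennreal t < \<phi> (ennreal (1/r) * (ennreal k * hinv e))) \<longleftrightarrow> (c < ennreal (1/r) * (ennreal k * hinv e))"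
        by (rule c)
      also have "\<dots> \<longleftrightarrow> (ennreal r * c < ennreal k * hinv e)" by (rule scale_less[OF r])
      also have "\<dots> \<longleftrightarrow> e < ereal k * \<xi>" unfolding \<xi>_def by (rule hinv_less_k[OF that(2) that(1)])
      finally show ?thesis .
    qed
    have "S \<subseteq> {x. supconv f g x < \<xi>}"
    proof
      fix x assume "x \<in> S"
      then have "ennreal t < \<phi> (ennreal (1/r) * (ennreal 1 * hinv (supconv f g x)))" using SW by auto
      have hn: "0 \<le> supconv f g x" by (rule supconv_nonneg) (rule gnn)
      have "supconv f g x < ereal 1 * \<xi>"
        using eqk[OF hn, of 1] \<open>ennreal t < _\<close> by simp
      then show "x \<in> {x. supconv f g x < \<xi>}" by (simp add: one_ereal_def[symmetric])
    qed
    then have "emeasure lborel S \<le> 2 ^ (DIM('a) - 1) * (emeasure lborel {x. max (check f x) 0 - ereal m < ereal (3/2) * \<xi>} + emeasure lborel {x. check g x + ereal m < ereal (3/2) * \<xi>})"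
      by (rule core[OF gnn mu nu m S])
    also have "{x. max (check f x) 0 - ereal m < ereal (3/2) * \<xi>} = {x. ennreal t < \<phi> (ennreal (1/r) * (ennreal (3/2) * hinv (max (check f x) 0 - ereal m)))}"
      using eqk[OF Fm_nonneg, of "3/2"] by auto
    also have "{x. check g x + ereal m < ereal (3/2) * \<xi>} = {x. ennreal t < \<phi> (ennreal (1/r) * (ennreal (3/2) * hinv (check g x + ereal m)))}"
      using eqk[OF Gm_nonneg, of "3/2"] by auto
    finally show "emeasure lborel S \<le> 2 ^ (DIM('a) - 1) * (emeasure lborel {x. ennreal t < \<phi> (ennreal (1/r) * (ennreal (3/2) * hinv (max (check f x) 0 - ereal m)))} + emeasure lborel {x. ennreal t < \<phi> (ennreal (1/r) * (ennreal (3/2) * hinv (check g x + ereal m)))})" .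
  qed
qed

end

lemma cont_aff: "continuous (at_right x) (\<lambda>p::ennreal. (2::ennreal) ^ n * (p + q))"
proof -
  have "((\<lambda>p::ennreal. (2::ennreal) ^ n * (p + q)) \<longlongrightarrow> 2 ^ n * (x + q)) (at_right x)"
    by (intro ennreal_tendsto_cmult tendsto_add tendsto_ident_at tendsto_const)
       (simp add: ennreal_two_pow[symmetric])
  then show ?thesis by (simp add: continuous_within)
qed

lemma orlicz_combine:
  fixes W U V :: "'a::euclidean_space \<Rightarrow> ennreal" and n :: nat
  assumes H: "\<And>r1 r2. 0 < r1 \<Longrightarrow> 0 < r2 \<Longrightarrow> (\<integral>\<^sup>+x. \<phi> (ennreal (1 / r1) * U x) \<partial>lebesgue) \<le> 1
      \<Longrightarrow> (\<integral>\<^sup>+x. \<phi> (ennreal (1 / r2) * V x) \<partial>lebesgue) \<le> 1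
      \<Longrightarrow> orlicz_norm \<phi> W \<le> 2 ^ n * (ennreal r1 + ennreal r2)"
  shows "orlicz_norm \<phi> W \<le> 2 ^ n * (orlicz_norm \<phi> U + orlicz_norm \<phi> V)"
proof -
  define PU where "PU = {ennreal r | r. r > 0 \<and> (\<integral>\<^sup>+x. \<phi> (ennreal (1 / r) * U x) \<partial>lebesgue) \<le> 1}"
  define PV where "PV = {ennreal r | r. r > 0 \<and> (\<integral>\<^sup>+x. \<phi> (ennreal (1 / r) * V x) \<partial>lebesgue) \<le> 1}"
  have nU: "orlicz_norm \<phi> U = Inf PU" unfolding orlicz_norm_def PU_def ..
  have nV: "orlicz_norm \<phi> V = Inf PV" unfolding orlicz_norm_def PV_def ..
  define L where "L = orlicz_norm \<phi> W"
  have c0: "(2::ennreal) ^ n \<noteq> 0" by simp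
  have key: "L \<le> 2 ^ n * (p + q)" if "p \<in> PU" "q \<in> PV" for p q
    using that H unfolding PU_def PV_def L_def by auto
  have bdd: "bdd_below A" for A :: "ennreal set" by (rule bdd_belowI[of _ 0]) simp
  have mono: "mono (\<lambda>p::ennreal. (2::ennreal) ^ n * (p + q))" for q
    by (auto simp: mono_def intro: mult_left_mono add_right_mono)
  have mono2: "mono (\<lambda>q::ennreal. (2::ennreal) ^ n * (p + q))" for p
    by (auto simp: mono_def intro: mult_left_mono add_left_mono)
  have cont2: "continuous (at_right x) (\<lambda>q::ennreal. (2::ennreal) ^ n * (p + q))" for x p
    using cont_aff[of x n p] by (simp add: add.commute)
  show ?thesis
  proof (cases "PU = {} \<or> PV = {}")
    case True
    then have "orlicz_norm \<phi> U = top \<or> orlicz_norm \<phi> V = top" using nU nV by auto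
    then have "orlicz_norm \<phi> U + orlicz_norm \<phi> V = top" by auto
    then show ?thesis using c0 by (auto simp: ennreal_mult_top)
  next
    case False
    have step1: "L \<le> 2 ^ n * (Inf PU + q)" if q: "q \<in> PV" for q
    proof -
      have "2 ^ n * (Inf PU + q) = (INF p\<in>PU. 2 ^ n * (p + q))"
        using False by (intro continuous_at_Inf_mono[OF mono cont_aff _ bdd]) auto
      moreover have "L \<le> (INF p\<in>PU. 2 ^ n * (p + q))"
        by (rule INF_greatest) (use key q in auto)
      ultimately show ?thesis by simp
    qed
    have "2 ^ n * (Inf PU + Inf PV) = (INF q\<in>PV. 2 ^ n * (Inf PU + q))"
      using False by (intro continuous_at_Inf_mono[OF mono2 cont2 _ bdd]) auto
    moreover have "L \<le> (INF q\<in>PV. 2 ^ n * (Inf PU + q))"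
      by (rule INF_greatest) (use step1 in auto)
    ultimately show ?thesis using nU nV L_def by simp
  qed
qed

theorem corollary20:
  fixes f g :: "'a::euclidean_space \<Rightarrow> ereal"
  assumes "f \<in> borel_measurable borel" and "g \<in> borel_measurable borel"
    and "\<forall>x. g x \<ge> 0"
    and "\<exists>x. f x \<noteq> \<infinity>" and "\<exists>x. g x \<noteq> \<infinity>"
  shows "(\<forall>x. supconv f g x \<ge> 0) \<and>
    (let m = ((INF x. max (f x) 0) - (INF x. g x)) / 2 in
     \<forall>\<phi>. young \<phi> \<longrightarrow>
       orlicz_norm \<phi> (\<lambda>x. hinv (supconv f g x))
         \<le> 2 ^ DIM('a) * (orlicz_norm \<phi> (\<lambda>x. hinv (max (check f x) 0 - m))
                         + orlicz_norm \<phi> (\<lambda>x. hinv (check g x + m))))"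
proof -
  have gnn: "\<And>x. 0 \<le> g x" using assms(3) by auto
  obtain x1 where x1: "f x1 \<noteq> \<infinity>" using assms(4) by auto
  obtain x2 where x2: "g x2 \<noteq> \<infinity>" using assms(5) by auto
  have "(INF x. max (f x) 0) \<le> max (f x1) 0" by (rule INF_lower) simp
  moreover have "max (f x1) 0 < \<infinity>" using x1 by (cases "f x1") (auto simp: max_def)
  moreover have "0 \<le> (INF x. max (f x) 0)" by (rule INF_greatest) simp
  ultimately obtain \<mu> where mu: "(INF x. max (f x) 0) = ereal \<mu>"
    by (cases "INF x. max (f x) 0") auto
  have "(INF x. g x) \<le> g x2" by (rule INF_lower) simp
  moreover have "g x2 < \<infinity>" using x2 by (cases "g x2") auto
  moreover have "0 \<le> (INF x. g x)" by (rule INF_greatest) (simp add: gnn)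
  ultimately obtain \<nu> where nu: "(INF x. g x) = ereal \<nu>"
    by (cases "INF x. g x") auto
  define mr where "mr = (\<mu> - \<nu>) / 2"
  have mE: "((INF x. max (f x) 0) - (INF x. g x)) / 2 = ereal mr"
    unfolding mu nu mr_def by (simp add: divide_ereal_def)
  have part2: "orlicz_norm \<phi> (\<lambda>x. hinv (supconv f g x))
         \<le> 2 ^ DIM('a) * (orlicz_norm \<phi> (\<lambda>x. hinv (max (check f x) 0 - ereal mr))
                         + orlicz_norm \<phi> (\<lambda>x. hinv (check g x + ereal mr)))"
    if y: "young \<phi>" for \<phi>
  proof (rule orlicz_combine)
    have phim[measurable]: "\<phi> \<in> borel_measurable borel"
      using y unfolding young_def by (intro mono_ennreal_measurable) auto
    fix r1 r2 :: real
    assume r1: "0 < r1" and r2: "0 < r2"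
      and I1: "(\<integral>\<^sup>+x. \<phi> (ennreal (1 / r1) * hinv (max (check f x) 0 - ereal mr)) \<partial>lebesgue) \<le> 1"
      and I2: "(\<integral>\<^sup>+x. \<phi> (ennreal (1 / r2) * hinv (check g x + ereal mr)) \<partial>lebesgue) \<le> 1"
    define N where "N = DIM('a)"
    have N1: "1 \<le> N" unfolding N_def by (simp add: DIM_positive Suc_le_eq)
    define r0 where "r0 = 2 ^ N * (r1 + r2)"
    have r0: "0 < r0" using r1 r2 by (simp add: r0_def)
    define l1 where "l1 = 3 * r1 / (2 * r0)"
    define l2 where "l2 = 3 * r2 / (2 * r0)"
    have l1: "0 \<le> l1" "l1 \<le> 1" and l2: "0 \<le> l2" "l2 \<le> 1"
    proof -
      have "(2::real) \<le> 2 ^ N" using N1 by (metis power_one_right power_increasing one_le_numeral)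
      then have "(2 * 2) * (r1 + r2) \<le> (2 * 2 ^ N) * (r1 + r2)"
        using r1 r2 by (intro mult_right_mono) auto
      then have "3 * (r1 + r2) \<le> 2 * r0" unfolding r0_def using r1 r2 by simp
      then show "0 \<le> l1" "l1 \<le> 1" "0 \<le> l2" "l2 \<le> 1"
        using r1 r2 r0 by (auto simp: l1_def l2_def divide_le_eq)
    qed
    have arg1: "ennreal (1/r0) * (ennreal (3/2) * u) = ennreal l1 * (ennreal (1/r1) * u)" for u
    proof -
      have e: "ennreal (1/r0 * (3/2)) = ennreal (1/r0) * ennreal (3/2)" by (rule ennreal_mult'') simp
      have "ennreal (1/r0) * (ennreal (3/2) * u) = ennreal (1/r0 * (3/2)) * u"
        by (simp only: e mult.assoc)
      also have "1/r0 * (3/2) = l1 * (1/r1)" using r1 r0 by (simp add: l1_def field_simps)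
      also have "ennreal (l1 * (1/r1)) * u = ennreal l1 * (ennreal (1/r1) * u)"
      proof -
        have e: "ennreal (l1 * (1/r1)) = ennreal l1 * ennreal (1/r1)" using r1 by (intro ennreal_mult'') simp
        show ?thesis by (simp only: e mult.assoc)
      qed
      finally show ?thesis .
    qed
    have arg2: "ennreal (1/r0) * (ennreal (3/2) * u) = ennreal l2 * (ennreal (1/r2) * u)" for u
    proof -
      have e: "ennreal (1/r0 * (3/2)) = ennreal (1/r0) * ennreal (3/2)" by (rule ennreal_mult'') simp
      have "ennreal (1/r0) * (ennreal (3/2) * u) = ennreal (1/r0 * (3/2)) * u"
        by (simp only: e mult.assoc)
      also have "1/r0 * (3/2) = l2 * (1/r2)" using r2 r0 by (simp add: l2_def field_simps)
      also have "ennreal (l2 * (1/r2)) * u = ennreal l2 * (ennreal (1/r2) * u)"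
      proof -
        have e: "ennreal (l2 * (1/r2)) = ennreal l2 * ennreal (1/r2)" using r2 by (intro ennreal_mult'') simp
        show ?thesis by (simp only: e mult.assoc)
      qed
      finally show ?thesis .
    qed
    have J1: "(\<integral>\<^sup>+x. \<phi> (ennreal (1/r0) * (ennreal (3/2) * hinv (max (check f x) 0 - ereal mr))) \<partial>lborel) \<le> ennreal l1"
    proof -
      have "(\<integral>\<^sup>+x. \<phi> (ennreal (1/r0) * (ennreal (3/2) * hinv (max (check f x) 0 - ereal mr))) \<partial>lborel)
          \<le> (\<integral>\<^sup>+x. ennreal l1 * \<phi> (ennreal (1/r1) * hinv (max (check f x) 0 - ereal mr)) \<partial>lborel)"
        by (intro nn_integral_mono) (simp add: arg1 young_scale[OF y l1])
      also have "\<dots> = ennreal l1 * (\<integral>\<^sup>+x. \<phi> (ennreal (1/r1) * hinv (max (check f x) 0 - ereal mr)) \<partial>lborel)"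
        by (rule nn_integral_cmult) measurable
      also have "\<dots> \<le> ennreal l1 * 1"
        using I1 by (intro mult_left_mono) (auto simp: nn_integral_completion)
      finally show ?thesis by simp
    qed
    have J2: "(\<integral>\<^sup>+x. \<phi> (ennreal (1/r0) * (ennreal (3/2) * hinv (check g x + ereal mr))) \<partial>lborel) \<le> ennreal l2"
    proof -
      have "(\<integral>\<^sup>+x. \<phi> (ennreal (1/r0) * (ennreal (3/2) * hinv (check g x + ereal mr))) \<partial>lborel)
          \<le> (\<integral>\<^sup>+x. ennreal l2 * \<phi> (ennreal (1/r2) * hinv (check g x + ereal mr)) \<partial>lborel)"
        by (intro nn_integral_mono) (simp add: arg2 young_scale[OF y l2])
      also have "\<dots> = ennreal l2 * (\<integral>\<^sup>+x. \<phi> (ennreal (1/r2) * hinv (check g x + ereal mr)) \<partial>lborel)"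
        by (rule nn_integral_cmult) measurable
      also have "\<dots> \<le> ennreal l2 * 1"
        using I2 by (intro mult_left_mono) (auto simp: nn_integral_completion)
      finally show ?thesis by simp
    qed
    have "(\<integral>\<^sup>+x. \<phi> (ennreal (1/r0) * hinv (supconv f g x)) \<partial>lebesgue)
        = (\<integral>\<^sup>+x. \<phi> (ennreal (1/r0) * hinv (supconv f g x)) \<partial>lborel)"
      by (simp add: nn_integral_completion)
    also have "\<dots> \<le> 2 ^ (DIM('a) - 1) * ((\<integral>\<^sup>+x. \<phi> (ennreal (1/r0) * (ennreal (3/2) * hinv (max (check f x) 0 - ereal mr))) \<partial>lborel)
       + (\<integral>\<^sup>+x. \<phi> (ennreal (1/r0) * (ennreal (3/2) * hinv (check g x + ereal mr))) \<partial>lborel))"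
      by (rule main_int[OF gnn mu nu mr_def y r0])
    also have "\<dots> \<le> 2 ^ (N - 1) * (ennreal l1 + ennreal l2)"
      unfolding N_def by (intro mult_left_mono add_mono J1 J2) simp
    also have "\<dots> = ennreal (2 ^ (N - 1) * (l1 + l2))"
      using l1 l2 by (simp add: ennreal_mult'' ennreal_plus[symmetric] ennreal_two_pow del: ennreal_plus)
    also have "2 ^ (N - 1) * (l1 + l2) = 3 / 4"
    proof -
      have p: "(2::real) ^ N = 2 * 2 ^ (N - 1)" using N1 by (metis Suc_diff_le diff_Suc_1 power_Suc)
      have s: "0 < r1 + r2" using r1 r2 by simp
      have K: "0 < (2::real) ^ (N - 1)" by simp
      have "l1 + l2 = (3 * (r1 + r2)) / (2 * r0)" by (simp add: l1_def l2_def add_divide_distrib algebra_simps)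
      also have "2 * r0 = (4 * 2 ^ (N - 1)) * (r1 + r2)" unfolding r0_def p by simp
      also have "(3 * (r1 + r2)) / ((4 * 2 ^ (N - 1)) * (r1 + r2)) = 3 / (4 * 2 ^ (N - 1))"
        using s by (simp add: divide_simps)
      finally have "l1 + l2 = 3 / (4 * 2 ^ (N - 1))" .
      then have "(l1 + l2) * (4 * 2 ^ (N - 1)) = 3" using K by (simp add: divide_simps)
      then show ?thesis by (simp add: algebra_simps)
    qed
    finally have int_le: "(\<integral>\<^sup>+x. \<phi> (ennreal (1/r0) * hinv (supconv f g x)) \<partial>lebesgue) \<le> 1"
      by (rule order_trans) (simp add: ennreal_leI[of "3/4" 1, simplified])
    have "orlicz_norm \<phi> (\<lambda>x. hinv (supconv f g x)) \<le> ennreal r0"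
      unfolding orlicz_norm_def using r0 int_le by (intro Inf_lower) auto
    also have "ennreal r0 = 2 ^ DIM('a) * (ennreal r1 + ennreal r2)"
      using r1 r2 by (simp add: r0_def N_def ennreal_mult'' ennreal_plus[symmetric] ennreal_two_pow del: ennreal_plus)
    finally show "orlicz_norm \<phi> (\<lambda>x. hinv (supconv f g x)) \<le> 2 ^ DIM('a) * (ennreal r1 + ennreal r2)" .
  qed
  show ?thesis
    unfolding Let_def mE
    using part2 supconv_nonneg[of g f] gnn by auto
qed

end
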